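(* Assume $G\in\mathcal{RH}_\infty$ and let $K=(I+QG_{yu})^{-1}Q$ with $Q\in\mathcal{RH}_\infty$ and $G_{wu}QG_{yv}=0$ (i.e. $K$ is a retrofit controller). Let $\overline{G}\in\overline{\mathcal G}$ and let $\overline{Q}:=\overline{G}(I-G_{wv}\overline{G})^{-1}\in\mathcal{RH}_\infty$ be its Youla parameter, so that $\overline{G}=(I+\overline{Q}G_{wv})^{-1}\overline{Q}$. Then the closed-loop transfer matrix $T_{zd}$ from $d$ to $z$ of the feedback system formed by $G$, $u=Ky$ and $v=\overline{G}w$ satisfies $$T_{zd}=M_{zd}(Q)+M_{zv}(Q)\,\overline{Q}\,M_{wd}(Q),$$ where $M_{zd}(Q):=G_{zd}+G_{zu}QG_{yd}$, $M_{zv}(Q):=G_{zv}+G_{zu}QG_{yv}$, $M_{wd}(Q):=G_{wd}+G_{wu}QG_{yd}$.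
   Context: A subsystem is a proper real rational transfer matrix $G$ with inputs $(v,d,u)$ (interaction input, disturbance input, control input) and outputs $(w,z,y)$ (interaction output, evaluation output, measurement output): $$\begin{bmatrix} w\\ z\\ y\end{bmatrix}=\begin{bmatrix} G_{wv}&G_{wd}&G_{wu}\\ G_{zv}&G_{zd}&G_{zu}\\ G_{yv}&G_{yd}&G_{yu}\end{bmatrix}\begin{bmatrix} v\\ d\\ u\end{bmatrix}.$$ An environment is a proper real rational transfer matrix $\overline{G}$ closing the interaction loop by $v=\overline{G}w$; a controller is a proper real rational $K$ closing $u=Ky$. $\mathcal{RH}_\infty$ is the set of stable, proper, real rational transfer matrices. All feedback interconnections are assumed well-posed; internal stability is in the standard sense. The preexisting system is $G_{\rm pre}$: the loop $w=G_{wv}v$, $v=\overline{G}w$. The set of admissible environments is $\overline{\mathcal G}:=\{\overline{G}: G_{\rm pre}\text{ is internally stable}\}$. *)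

theory Defs
  imports "HOL-Computational_Algebra.Polynomial" "HOL-Computational_Algebra.Fraction_Field"
    "Jordan_Normal_Form.Matrix"
begin

type_synonym rfun = "real poly fract"

definition proper_rat :: "rfun \<Rightarrow> bool" where
  "proper_rat f \<longleftrightarrow> (\<exists>p q. q \<noteq> 0 \<and> f = Fract p q \<and> degree p \<le> degree q)"

text \<open>Membership in RH-infinity (continuous time): proper, with all poles in the open left half plane.\<close>
definition stable_rat :: "rfun \<Rightarrow> bool" where
  "stable_rat f \<longleftrightarrow> (\<exists>p q. q \<noteq> 0 \<and> f = Fract p q \<and> degree p \<le> degree q \<and>
      (\<forall>z::complex. poly (map_poly complex_of_real q) z = 0 \<longrightarrow> Re z < 0))"

definition proper_mat :: "rfun mat \<Rightarrow> bool" where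
  "proper_mat A \<longleftrightarrow> (\<forall>i<dim_row A. \<forall>j<dim_col A. proper_rat (A $$ (i,j)))"

definition RH_mat :: "rfun mat \<Rightarrow> bool" where
  "RH_mat A \<longleftrightarrow> (\<forall>i<dim_row A. \<forall>j<dim_col A. stable_rat (A $$ (i,j)))"

text \<open>Matrix inverse (meaningful when the matrix is invertible).\<close>
definition minv :: "rfun mat \<Rightarrow> rfun mat" where
  "minv A = (SOME B. inverts_mat A B \<and> inverts_mat B A)"

text \<open>Internal stability of the feedback loop e1 = r1 + P e2, e2 = r2 + K e1 (P : m x n, K : n x m):
  the matrix [[I, -P], [-K, I]] is invertible (well-posedness) and its inverse is in RH-infinity.\<close>
definition internally_stable :: "nat \<Rightarrow> nat \<Rightarrow> rfun mat \<Rightarrow> rfun mat \<Rightarrow> bool" where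
  "internally_stable m n P K \<longleftrightarrow>
     (let F = four_block_mat (1\<^sub>m m) (- P) (- K) (1\<^sub>m n) in
      \<exists>M. M \<in> carrier_mat (m+n) (m+n) \<and> inverts_mat F M \<and> inverts_mat M F \<and> RH_mat M)"

definition loop_eqs ::
  "rfun mat \<Rightarrow> rfun mat \<Rightarrow> rfun mat \<Rightarrow> rfun mat \<Rightarrow> rfun mat \<Rightarrow> rfun mat \<Rightarrow>
   rfun mat \<Rightarrow> rfun mat \<Rightarrow> rfun mat \<Rightarrow> rfun mat \<Rightarrow> rfun mat \<Rightarrow>
   rfun vec \<Rightarrow> rfun vec \<Rightarrow> rfun vec \<Rightarrow> rfun vec \<Rightarrow> rfun vec \<Rightarrow> rfun vec \<Rightarrow> bool" where
  "loop_eqs Gwv Gwd Gwu Gzv Gzd Gzu Gyv Gyd Gyu K Gbar d w z y v u \<longleftrightarrow>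
     w = Gwv *\<^sub>v v + Gwd *\<^sub>v d + Gwu *\<^sub>v u \<and>
     z = Gzv *\<^sub>v v + Gzd *\<^sub>v d + Gzu *\<^sub>v u \<and>
     y = Gyv *\<^sub>v v + Gyd *\<^sub>v d + Gyu *\<^sub>v u \<and>
     v = Gbar *\<^sub>v w \<and> u = K *\<^sub>v y"

definition closed_loop_zd ::
  "nat \<Rightarrow> nat \<Rightarrow> nat \<Rightarrow> nat \<Rightarrow> nat \<Rightarrow> nat \<Rightarrow>
   rfun mat \<Rightarrow> rfun mat \<Rightarrow> rfun mat \<Rightarrow> rfun mat \<Rightarrow> rfun mat \<Rightarrow> rfun mat \<Rightarrow>
   rfun mat \<Rightarrow> rfun mat \<Rightarrow> rfun mat \<Rightarrow> rfun mat \<Rightarrow> rfun mat \<Rightarrow> rfun mat \<Rightarrow> bool" where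
  "closed_loop_zd nw nz ny nv nd nu Gwv Gwd Gwu Gzv Gzd Gzu Gyv Gyd Gyu K Gbar T \<longleftrightarrow>
     T \<in> carrier_mat nz nd \<and>
     (\<forall>d \<in> carrier_vec nd. \<forall>w z y v u.
        w \<in> carrier_vec nw \<longrightarrow> z \<in> carrier_vec nz \<longrightarrow> y \<in> carrier_vec ny \<longrightarrow>
        v \<in> carrier_vec nv \<longrightarrow> u \<in> carrier_vec nu \<longrightarrow>
        loop_eqs Gwv Gwd Gwu Gzv Gzd Gzu Gyv Gyd Gyu K Gbar d w z y v u \<longrightarrow> z = T *\<^sub>v d)"

definition well_posed ::
  "nat \<Rightarrow> nat \<Rightarrow> nat \<Rightarrow> nat \<Rightarrow> nat \<Rightarrow> nat \<Rightarrow>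
   rfun mat \<Rightarrow> rfun mat \<Rightarrow> rfun mat \<Rightarrow> rfun mat \<Rightarrow> rfun mat \<Rightarrow> rfun mat \<Rightarrow>
   rfun mat \<Rightarrow> rfun mat \<Rightarrow> rfun mat \<Rightarrow> rfun mat \<Rightarrow> rfun mat \<Rightarrow> bool" where
  "well_posed nw nz ny nv nd nu Gwv Gwd Gwu Gzv Gzd Gzu Gyv Gyd Gyu K Gbar \<longleftrightarrow>
     (\<forall>d \<in> carrier_vec nd. \<exists>!(w,z,y,v,u).
        w \<in> carrier_vec nw \<and> z \<in> carrier_vec nz \<and> y \<in> carrier_vec ny \<and>
        v \<in> carrier_vec nv \<and> u \<in> carrier_vec nu \<and>
        loop_eqs Gwv Gwd Gwu Gzv Gzd Gzu Gyv Gyd Gyu K Gbar d w z y v u)"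

end

theory Submission imports Defs "Jordan_Normal_Form.Determinant" begin

lemma vcancel: fixes a b c :: "'a::ab_group_add vec"
  assumes "a \<in> carrier_vec n" "b \<in> carrier_vec n" "c \<in> carrier_vec n" "a + c = b + c"
  shows "a = b"
proof (rule eq_vecI)
  fix i assume i: "i < dim_vec b"
  have i': "i < n" using i assms by simp
  have "(a+c) $ i = (b+c) $ i" using assms(4) by (rule arg_cong)
  moreover have "(a+c) $ i = a $ i + c $ i" "(b+c) $ i = b $ i + c $ i"
    using assms(1-3) i' by auto
  ultimately show "a $ i = b $ i" by simp
qed (use assms in auto)


lemma vres1: fixes a b :: "'a::ab_group_add vec"
  assumes "a \<in> carrier_vec n" "b \<in> carrier_vec n"
  shows "(a + b) + - a = b"
  by (rule eq_vecI, use assms in auto)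

lemma vres2: fixes a b c e :: "'a::ab_group_add vec"
  assumes "a \<in> carrier_vec n" "b \<in> carrier_vec n" "c \<in> carrier_vec n" "e \<in> carrier_vec n"
  shows "a + b + (c + e) = (a + c) + (b + e)"
  by (rule eq_vecI, use assms in auto)

lemma vres3: fixes a b :: "'a::ab_group_add vec"
  assumes "a \<in> carrier_vec n" "b \<in> carrier_vec n"
  shows "a + b = b + a"
  by (rule eq_vecI, use assms in auto)

lemma assoc3v: assumes "A \<in> carrier_mat a b" "B \<in> carrier_mat b c" "C \<in> carrier_mat c e" "x \<in> carrier_vec e"
  shows "(A * B * C) *\<^sub>v x = A *\<^sub>v (B *\<^sub>v (C *\<^sub>v x))"
proof -
  have "(A * B * C) *\<^sub>v x = (A * B) *\<^sub>v (C *\<^sub>v x)"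
    by (rule assoc_mult_mat_vec[of _ a c], use assms in auto)
  also have "\<dots> = A *\<^sub>v (B *\<^sub>v (C *\<^sub>v x))"
    by (rule assoc_mult_mat_vec[of _ a b], use assms in auto)
  finally show ?thesis .
qed

lemma assoc3v': assumes "A \<in> carrier_mat a b" "B \<in> carrier_mat b c" "C \<in> carrier_mat c e" "x \<in> carrier_vec e"
  shows "(A * (B * C)) *\<^sub>v x = A *\<^sub>v (B *\<^sub>v (C *\<^sub>v x))"
  using assoc3v[OF assms] assoc_mult_mat[OF assms(1-3)] by simp

lemma minv_props:
  assumes A: "A \<in> carrier_mat n n" and ex: "\<exists>B. inverts_mat A B \<and> inverts_mat B A"
  shows "minv A \<in> carrier_mat n n \<and> A * minv A = 1\<^sub>m n \<and> minv A * A = 1\<^sub>m n"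
proof -
  have h: "inverts_mat A (minv A) \<and> inverts_mat (minv A) A"
    unfolding minv_def using someI_ex[OF ex] .
  let ?B = "minv A"
  have 1: "A * ?B = 1\<^sub>m n" using h A unfolding inverts_mat_def by simp
  have 2: "?B * A = 1\<^sub>m (dim_row ?B)" using h unfolding inverts_mat_def by simp
  have c: "dim_col ?B = n" using arg_cong[OF 1, of dim_col] by simp
  have r: "dim_row ?B = n" using arg_cong[OF 2, of dim_col] A by simp
  show ?thesis using 1 2 c r by auto
qed

lemma det_inv:
  fixes A :: "rfun mat"
  assumes A: "A \<in> carrier_mat n n" and k: "\<And>x. x \<in> carrier_vec n \<Longrightarrow> A *\<^sub>v x = 0\<^sub>v n \<Longrightarrow> x = 0\<^sub>v n"
  shows "\<exists>B. inverts_mat A B \<and> inverts_mat B A"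
proof -
  have "det A \<noteq> 0" using det_0_iff_vec_prod_zero_field[OF A] k by auto
  from det_non_zero_imp_unit[OF A this, of "()"]
  obtain B where "B \<in> carrier_mat n n" "B * A = 1\<^sub>m n" "A * B = 1\<^sub>m n"
    unfolding Units_def ring_mat_def by auto
  thus ?thesis using A unfolding inverts_mat_def by auto
qed

theorem theorem2:
  fixes nw nz ny nv nd nu :: nat
    and Gwv Gwd Gwu Gzv Gzd Gzu Gyv Gyd Gyu Q Gbar :: "rfun mat"
  assumes dims:
      "Gwv \<in> carrier_mat nw nv" "Gwd \<in> carrier_mat nw nd" "Gwu \<in> carrier_mat nw nu"
      "Gzv \<in> carrier_mat nz nv" "Gzd \<in> carrier_mat nz nd" "Gzu \<in> carrier_mat nz nu"
      "Gyv \<in> carrier_mat ny nv" "Gyd \<in> carrier_mat ny nd" "Gyu \<in> carrier_mat ny nu"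
      "Q \<in> carrier_mat nu ny" "Gbar \<in> carrier_mat nv nw"
    and G_stable: "RH_mat Gwv" "RH_mat Gwd" "RH_mat Gwu" "RH_mat Gzv" "RH_mat Gzd"
      "RH_mat Gzu" "RH_mat Gyv" "RH_mat Gyd" "RH_mat Gyu"
    and Q_stable: "RH_mat Q"
    and K_wp: "invertible_mat (1\<^sub>m nu + Q * Gyu)"
    and retrofit: "Gwu * Q * Gyv = 0\<^sub>m nw nv"
    and Gbar_proper: "proper_mat Gbar"
    and Gbar_adm: "internally_stable nw nv Gwv Gbar"
    and wp: "well_posed nw nz ny nv nd nu Gwv Gwd Gwu Gzv Gzd Gzu Gyv Gyd Gyu
               (minv (1\<^sub>m nu + Q * Gyu) * Q) Gbar"
  shows "let K = minv (1\<^sub>m nu + Q * Gyu) * Q;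
             Qbar = Gbar * minv (1\<^sub>m nw - Gwv * Gbar);
             Mzd = Gzd + Gzu * Q * Gyd;
             Mzv = Gzv + Gzu * Q * Gyv;
             Mwd = Gwd + Gwu * Q * Gyd
         in closed_loop_zd nw nz ny nv nd nu Gwv Gwd Gwu Gzv Gzd Gzu Gyv Gyd Gyu K Gbar
              (Mzd + Mzv * Qbar * Mwd)"
proof -
  note c = dims
  define A where "A = 1\<^sub>m nu + Q * Gyu"
  define Ai where "Ai = minv A"
  define B where "B = 1\<^sub>m nw - Gwv * Gbar"
  define Bi where "Bi = minv B"
  define Mzd where "Mzd = Gzd + Gzu * Q * Gyd"
  define Mzv where "Mzv = Gzv + Gzu * Q * Gyv"
  define Mwd where "Mwd = Gwd + Gwu * Q * Gyd"
  have Ac: "A \<in> carrier_mat nu nu" unfolding A_def using c by auto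
  have Bc: "B \<in> carrier_mat nw nw" unfolding B_def using c by auto
  have Mc: "Mzd \<in> carrier_mat nz nd" "Mzv \<in> carrier_mat nz nv" "Mwd \<in> carrier_mat nw nd"
    unfolding Mzd_def Mzv_def Mwd_def using c by auto
  have "\<exists>X. inverts_mat A X \<and> inverts_mat X A" using K_wp unfolding A_def invertible_mat_def by auto
  from minv_props[OF Ac this] have Ai: "Ai \<in> carrier_mat nu nu" "A * Ai = 1\<^sub>m nu" "Ai * A = 1\<^sub>m nu"
    unfolding Ai_def by auto
  have Bker: "x = 0\<^sub>v nw" if x: "x \<in> carrier_vec nw" and Bx: "B *\<^sub>v x = 0\<^sub>v nw" for x
  proof -
    define F where "F = four_block_mat (1\<^sub>m nw) (- Gwv) (- Gbar) (1\<^sub>m nv)"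
    obtain M where M: "M \<in> carrier_mat (nw+nv) (nw+nv)" "inverts_mat M F"
      using Gbar_adm unfolding internally_stable_def Let_def F_def by auto
    have MF: "M * F = 1\<^sub>m (nw+nv)" using M unfolding inverts_mat_def by auto
    have Fc: "F \<in> carrier_mat (nw+nv) (nw+nv)" unfolding F_def using c by auto
    have gx: "Gbar *\<^sub>v x \<in> carrier_vec nv" using c x by auto
    have "F *\<^sub>v (x @\<^sub>v Gbar *\<^sub>v x) = (1\<^sub>m nw *\<^sub>v x + (- Gwv) *\<^sub>v (Gbar *\<^sub>v x)) @\<^sub>v
        ((- Gbar) *\<^sub>v x + 1\<^sub>m nv *\<^sub>v (Gbar *\<^sub>v x))"
      unfolding F_def by (rule four_block_mat_mult_vec, use c x gx in auto)
    also have "1\<^sub>m nw *\<^sub>v x + (- Gwv) *\<^sub>v (Gbar *\<^sub>v x) = B *\<^sub>v x"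
    proof -
      have "B *\<^sub>v x = 1\<^sub>m nw *\<^sub>v x - (Gwv * Gbar) *\<^sub>v x"
        unfolding B_def by (rule minus_mult_distrib_mat_vec, use c x in auto)
      also have "\<dots> = 1\<^sub>m nw *\<^sub>v x + - (Gwv * Gbar *\<^sub>v x)"
        by (rule minus_add_uminus_vec, use c x in auto)
      finally show ?thesis using c x gx by simp
    qed
    also have "(- Gbar) *\<^sub>v x + 1\<^sub>m nv *\<^sub>v (Gbar *\<^sub>v x) = 0\<^sub>v nv"
    proof -
      have "(- Gbar) *\<^sub>v x = - (Gbar *\<^sub>v x)" using c x by simp
      thus ?thesis using gx by simp
    qed
    finally have "F *\<^sub>v (x @\<^sub>v Gbar *\<^sub>v x) = 0\<^sub>v nw @\<^sub>v 0\<^sub>v nv" using Bx by simp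
    also have z0: "0\<^sub>v nw @\<^sub>v 0\<^sub>v nv = (0\<^sub>v (nw+nv) :: rfun vec)" by (rule eq_vecI) auto
    finally have "F *\<^sub>v (x @\<^sub>v Gbar *\<^sub>v x) = 0\<^sub>v (nw+nv)" .
    hence "M *\<^sub>v (F *\<^sub>v (x @\<^sub>v Gbar *\<^sub>v x)) = 0\<^sub>v (nw+nv)"
    proof -
      assume h: "F *\<^sub>v (x @\<^sub>v Gbar *\<^sub>v x) = 0\<^sub>v (nw+nv)"
      have "M *\<^sub>v 0\<^sub>v (nw+nv) = 0\<^sub>v (nw+nv)" by (rule eq_vecI, use M(1) in auto)
      thus ?thesis using h by simp
    qed
    moreover have "M *\<^sub>v (F *\<^sub>v (x @\<^sub>v Gbar *\<^sub>v x)) = x @\<^sub>v Gbar *\<^sub>v x"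
      using M(1) Fc x gx MF by (simp flip: assoc_mult_mat_vec)
    ultimately have "x @\<^sub>v Gbar *\<^sub>v x = 0\<^sub>v nw @\<^sub>v 0\<^sub>v nv"
      using z0 by simp
    thus ?thesis using x by simp
  qed
  from minv_props[OF Bc det_inv[OF Bc Bker]] have Bi: "Bi \<in> carrier_mat nw nw" "B * Bi = 1\<^sub>m nw" "Bi * B = 1\<^sub>m nw"
    unfolding Bi_def by auto
  show ?thesis
    unfolding Let_def closed_loop_zd_def A_def[symmetric] Ai_def[symmetric] B_def[symmetric] Bi_def[symmetric]
      Mzd_def[symmetric] Mzv_def[symmetric] Mwd_def[symmetric]
  proof (intro conjI ballI allI impI)
    show "Mzd + Mzv * (Gbar * Bi) * Mwd \<in> carrier_mat nz nd" using Mc Bi c by auto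
    fix d w z y v u
    assume d: "d \<in> carrier_vec nd" and w: "w \<in> carrier_vec nw" and z: "z \<in> carrier_vec nz"
      and y: "y \<in> carrier_vec ny" and v: "v \<in> carrier_vec nv" and u: "u \<in> carrier_vec nu"
      and L: "loop_eqs Gwv Gwd Gwu Gzv Gzd Gzu Gyv Gyd Gyu (Ai * Q) Gbar d w z y v u"
    note eqs = L[unfolded loop_eqs_def]
    have ew: "w = Gwv *\<^sub>v v + Gwd *\<^sub>v d + Gwu *\<^sub>v u" and ez: "z = Gzv *\<^sub>v v + Gzd *\<^sub>v d + Gzu *\<^sub>v u"
      and ey: "y = Gyv *\<^sub>v v + Gyd *\<^sub>v d + Gyu *\<^sub>v u" and ev: "v = Gbar *\<^sub>v w"
      and eu: "u = (Ai * Q) *\<^sub>v y" using eqs by (blast+)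
    have s1: "A *\<^sub>v u = Q *\<^sub>v y"
    proof -
      have "A *\<^sub>v u = A *\<^sub>v (Ai *\<^sub>v (Q *\<^sub>v y))" unfolding eu
        by (subst assoc_mult_mat_vec[of _ nu nu _ ny], use Ai c y in auto)
      also have "\<dots> = (A * (Ai * Q)) *\<^sub>v y" by (rule assoc3v'[symmetric], use Ac Ai c y in auto)
      also have "A * (Ai * Q) = (A * Ai) * Q" using assoc_mult_mat[OF Ac Ai(1) c(10)] by simp
      also have "\<dots> = Q" using Ai c by simp
      finally show ?thesis .
    qed
    have s2: "A *\<^sub>v u = u + Q *\<^sub>v (Gyu *\<^sub>v u)"
    proof -
      have "A *\<^sub>v u = 1\<^sub>m nu *\<^sub>v u + (Q * Gyu) *\<^sub>v u"
        unfolding A_def by (rule add_mult_distrib_mat_vec, use c u in auto)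
      thus ?thesis using c u by simp
    qed
    have s3: "Q *\<^sub>v y = (Q *\<^sub>v (Gyv *\<^sub>v v) + Q *\<^sub>v (Gyd *\<^sub>v d)) + Q *\<^sub>v (Gyu *\<^sub>v u)"
      unfolding ey using c v d u by (simp add: mult_add_distrib_mat_vec[of _ nu ny])
    have su: "u = Q *\<^sub>v (Gyv *\<^sub>v v) + Q *\<^sub>v (Gyd *\<^sub>v d)"
      by (rule vcancel[of _ nu _ "Q *\<^sub>v (Gyu *\<^sub>v u)"], use c v d u s1 s2 s3 in auto)
    have zero: "Gwu *\<^sub>v (Q *\<^sub>v (Gyv *\<^sub>v v)) = 0\<^sub>v nw"
    proof -
      have "Gwu *\<^sub>v (Q *\<^sub>v (Gyv *\<^sub>v v)) = (Gwu * Q * Gyv) *\<^sub>v v" by (rule assoc3v[symmetric], use c v in auto)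
      moreover have "(0\<^sub>m nw nv :: rfun mat) *\<^sub>v v = 0\<^sub>v nw" by (rule eq_vecI, use v in auto)
      ultimately show ?thesis using retrofit by simp
    qed
    have gu: "Gwu *\<^sub>v u = (Gwu * Q * Gyd) *\<^sub>v d"
    proof -
      have "Gwu *\<^sub>v u = Gwu *\<^sub>v (Q *\<^sub>v (Gyv *\<^sub>v v)) + Gwu *\<^sub>v (Q *\<^sub>v (Gyd *\<^sub>v d))"
        unfolding su by (rule mult_add_distrib_mat_vec, use c v d in auto)
      thus ?thesis using zero c d assoc3v[OF c(3) c(10) c(8) d] by simp
    qed
    have sw: "w = Gwv *\<^sub>v v + Mwd *\<^sub>v d"
    proof -
      have "Mwd *\<^sub>v d = Gwd *\<^sub>v d + (Gwu * Q * Gyd) *\<^sub>v d"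
        unfolding Mwd_def by (rule add_mult_distrib_mat_vec, use c d in auto)
      moreover have "Gwu * Q * Gyd \<in> carrier_mat nw nd" using c by auto
      hence "(Gwu * Q * Gyd) *\<^sub>v d \<in> carrier_vec nw" using d by auto
      ultimately show ?thesis unfolding ew gu using c v d assoc_add_vec[of "Gwv *\<^sub>v v" nw "Gwd *\<^sub>v d" "(Gwu * Q * Gyd) *\<^sub>v d"]
        by simp
    qed
    have sB: "B *\<^sub>v w = Mwd *\<^sub>v d"
    proof -
      have "B *\<^sub>v w = 1\<^sub>m nw *\<^sub>v w - (Gwv * Gbar) *\<^sub>v w"
        unfolding B_def by (rule minus_mult_distrib_mat_vec, use c w in auto)
      also have "\<dots> = 1\<^sub>m nw *\<^sub>v w + - (Gwv * Gbar *\<^sub>v w)"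
        by (rule minus_add_uminus_vec, use c w in auto)
      also have "\<dots> = w + - (Gwv *\<^sub>v v)" using c w ev by simp
      also have "\<dots> = Mwd *\<^sub>v d" 
      proof -
        have r: "(Gwv *\<^sub>v v + Mwd *\<^sub>v d) + - (Gwv *\<^sub>v v) = Mwd *\<^sub>v d"
          by (rule vres1[of _ nw], use c v d Mc in auto)
        from r show ?thesis by (simp only: sw[symmetric])
      qed
      finally show ?thesis .
    qed
    have sw2: "w = Bi *\<^sub>v (Mwd *\<^sub>v d)"
    proof -
      have "Bi *\<^sub>v (B *\<^sub>v w) = (Bi * B) *\<^sub>v w"
        by (rule assoc_mult_mat_vec[symmetric, of _ nw nw _ nw], use Bi Bc w in auto)
      also have "\<dots> = w" using Bi(3) w by simp
      finally show ?thesis using sB by simp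
    qed
    have sv: "v = (Gbar * Bi * Mwd) *\<^sub>v d" unfolding ev sw2 by (rule assoc3v[OF c(11) Bi(1) Mc(3) d, symmetric])
    have szv: "Mzv *\<^sub>v v = Gzv *\<^sub>v v + Gzu *\<^sub>v (Q *\<^sub>v (Gyv *\<^sub>v v))"
    proof -
      have "Mzv *\<^sub>v v = Gzv *\<^sub>v v + (Gzu * Q * Gyv) *\<^sub>v v"
        unfolding Mzv_def by (rule add_mult_distrib_mat_vec, use c v in auto)
      thus ?thesis using c v assoc3v[OF c(6) c(10) c(7) v] by simp
    qed
    have szd: "Mzd *\<^sub>v d = Gzd *\<^sub>v d + Gzu *\<^sub>v (Q *\<^sub>v (Gyd *\<^sub>v d))"
    proof -
      have "Mzd *\<^sub>v d = Gzd *\<^sub>v d + (Gzu * Q * Gyd) *\<^sub>v d"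
        unfolding Mzd_def by (rule add_mult_distrib_mat_vec, use c d in auto)
      thus ?thesis using c d assoc3v[OF c(6) c(10) c(8) d] by simp
    qed
    have gzu: "Gzu *\<^sub>v u = Gzu *\<^sub>v (Q *\<^sub>v (Gyv *\<^sub>v v)) + Gzu *\<^sub>v (Q *\<^sub>v (Gyd *\<^sub>v d))"
      unfolding su by (rule mult_add_distrib_mat_vec, use c v d in auto)
    have "z = Mzv *\<^sub>v v + Mzd *\<^sub>v d"
      unfolding ez gzu szv szd
      by (rule vres2[of "Gzv *\<^sub>v v" nz "Gzd *\<^sub>v d" "Gzu *\<^sub>v (Q *\<^sub>v (Gyv *\<^sub>v v))" "Gzu *\<^sub>v (Q *\<^sub>v (Gyd *\<^sub>v d))"],
          use c v d in auto)
    also have "\<dots> = Mzd *\<^sub>v d + (Mzv * (Gbar * Bi) * Mwd) *\<^sub>v d"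
    proof -
      have "Mzv *\<^sub>v v = (Mzv * (Gbar * Bi) * Mwd) *\<^sub>v d"
      proof -
        have GB: "Gbar * Bi \<in> carrier_mat nv nw" using c Bi by auto
        have "(Mzv * (Gbar * Bi) * Mwd) *\<^sub>v d = Mzv *\<^sub>v ((Gbar * Bi) *\<^sub>v (Mwd *\<^sub>v d))"
          by (rule assoc3v[OF Mc(2) GB Mc(3) d])
        also have "(Gbar * Bi) *\<^sub>v (Mwd *\<^sub>v d) = Gbar *\<^sub>v (Bi *\<^sub>v (Mwd *\<^sub>v d))"
          by (rule assoc_mult_mat_vec[of _ nv nw _ nw], use c Bi Mc d in auto)
        finally show ?thesis using sv assoc3v[OF c(11) Bi(1) Mc(3) d] by simp
      qed
      moreover have "Mzv *\<^sub>v v + Mzd *\<^sub>v d = Mzd *\<^sub>v d + Mzv *\<^sub>v v"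
        by (rule vres3[of _ nz], use c Mc v d in auto)
      ultimately show ?thesis by simp
    qed
    also have "\<dots> = (Mzd + Mzv * (Gbar * Bi) * Mwd) *\<^sub>v d"
      by (rule add_mult_distrib_mat_vec[symmetric], use c Mc Bi d in auto)
    finally show "z = (Mzd + Mzv * (Gbar * Bi) * Mwd) *\<^sub>v d" .
  qed
qed

end
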